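(* Let $P\in\mathbb{C}[z_1,\dots,z_d]$. Then for every integer $s\ge1$, \[ \|P^s\|_a\ge\|P\|_a^s . \]
   Context: For multi-indices $\alpha\in\mathbb{N}^d$ write $z^\alpha=z_1^{\alpha_1}\cdots z_d^{\alpha_d}$ and $\alpha!=\alpha_1!\cdots\alpha_d!$. The apolar inner product on $\mathbb{C}[z_1,\dots,z_d]$ is $\langle \sum c_\alpha z^\alpha,\sum d_\alpha z^\alpha\rangle_a=\sum_\alpha\alpha!\,c_\alpha\overline{d_\alpha}$, with norm $\|P\|_a=\sqrt{\langle P,P\rangle_a}$. *)

theory Defs
  imports "HOL-Analysis.Analysis" "HOL-Library.Poly_Mapping"
begin

text \<open>Multivariate complex polynomials: finitely supported maps from multi-indices
  (finitely supported exponent vectors nat =>0 nat; variable z_(i+1) has index i)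
  to coefficients. Multiplication is the convolution product of Poly_Mapping.\<close>

type_synonym cpoly = "(nat \<Rightarrow>\<^sub>0 nat) \<Rightarrow>\<^sub>0 complex"

definition in_vars :: "nat \<Rightarrow> cpoly \<Rightarrow> bool" where
  "in_vars d P \<longleftrightarrow> (\<forall>\<alpha>\<in>Poly_Mapping.keys P. Poly_Mapping.keys \<alpha> \<subseteq> {..<d})"

definition mfact :: "(nat \<Rightarrow>\<^sub>0 nat) \<Rightarrow> real" where
  "mfact \<alpha> = (\<Prod>i\<in>Poly_Mapping.keys \<alpha>. fact (Poly_Mapping.lookup \<alpha> i))"

definition apolar_inner :: "cpoly \<Rightarrow> cpoly \<Rightarrow> complex" where
  "apolar_inner P Q = (\<Sum>\<alpha>\<in>Poly_Mapping.keys P \<union> Poly_Mapping.keys Q.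
      complex_of_real (mfact \<alpha>) * Poly_Mapping.lookup P \<alpha> * cnj (Poly_Mapping.lookup Q \<alpha>))"

definition apolar_norm :: "cpoly \<Rightarrow> real" where
  "apolar_norm P = sqrt (Re (apolar_inner P P))"

end

theory Submission
  imports Defs "HOL-Probability.Distributions"
begin

definition mon :: "nat \<Rightarrow> (nat \<Rightarrow>\<^sub>0 nat) \<Rightarrow> (nat \<Rightarrow> complex) \<Rightarrow> complex" where
  "mon d \<alpha> x = (\<Prod>i<d. x i ^ Poly_Mapping.lookup \<alpha> i)"

definition ev :: "nat \<Rightarrow> cpoly \<Rightarrow> (nat \<Rightarrow> complex) \<Rightarrow> complex" where
  "ev d F x = (\<Sum>\<alpha>\<in>Poly_Mapping.keys F. Poly_Mapping.lookup F \<alpha> * mon d \<alpha> x)"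

lemma ev_superset:
  assumes "finite S" "Poly_Mapping.keys F \<subseteq> S"
  shows "ev d F x = (\<Sum>\<alpha>\<in>S. Poly_Mapping.lookup F \<alpha> * mon d \<alpha> x)"
  unfolding ev_def
  by (rule sum.mono_neutral_left) (use assms in \<open>auto simp: in_keys_iff\<close>)

lemma mon_add: "mon d (\<alpha> + \<beta>) x = mon d \<alpha> x * mon d \<beta> x"
  by (simp add: mon_def lookup_add power_add prod.distrib)

lemma ev_zero[simp]: "ev d 0 x = 0"
  by (simp add: ev_def)

lemma ev_add: "ev d (F + G) x = ev d F x + ev d G x"
proof -
  let ?S = "Poly_Mapping.keys F \<union> Poly_Mapping.keys G"
  have "ev d (F + G) x = (\<Sum>\<alpha>\<in>?S. Poly_Mapping.lookup (F+G) \<alpha> * mon d \<alpha> x)"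
    by (rule ev_superset) (auto simp: keys_add)
  also have "\<dots> = (\<Sum>\<alpha>\<in>?S. Poly_Mapping.lookup F \<alpha> * mon d \<alpha> x) + (\<Sum>\<alpha>\<in>?S. Poly_Mapping.lookup G \<alpha> * mon d \<alpha> x)"
    by (simp add: lookup_add distrib_right sum.distrib)
  also have "\<dots> = ev d F x + ev d G x"
    by (subst (1 2) ev_superset[of ?S]) auto
  finally show ?thesis .
qed

lemma ev_sum: "finite A \<Longrightarrow> ev d (\<Sum>a\<in>A. F a) x = (\<Sum>a\<in>A. ev d (F a) x)"
  by (induction A rule: finite_induct) (auto simp: ev_add)

lemma ev_single: "ev d (Poly_Mapping.single \<alpha> c) x = c * mon d \<alpha> x"
  by (simp add: ev_def)

lemma poly_single_sum: "F = (\<Sum>\<alpha>\<in>Poly_Mapping.keys F. Poly_Mapping.single \<alpha> (Poly_Mapping.lookup F \<alpha>))"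
proof (rule poly_mapping_eqI)
  fix k
  show "Poly_Mapping.lookup F k = Poly_Mapping.lookup (\<Sum>\<alpha>\<in>Poly_Mapping.keys F. Poly_Mapping.single \<alpha> (Poly_Mapping.lookup F \<alpha>)) k"
    by (simp add: lookup_sum lookup_single when_def in_keys_iff)
qed

lemma ev_mult: "ev d (F * G) x = ev d F x * ev d G x"
proof -
  let ?A = "Poly_Mapping.keys F" and ?B = "Poly_Mapping.keys G"
  have "F * G = (\<Sum>a\<in>?A. Poly_Mapping.single a (Poly_Mapping.lookup F a)) * (\<Sum>b\<in>?B. Poly_Mapping.single b (Poly_Mapping.lookup G b))"
    by (subst (1) poly_single_sum, subst (2) poly_single_sum) (rule refl)
  also have "\<dots> = (\<Sum>a\<in>?A. \<Sum>b\<in>?B. Poly_Mapping.single (a+b) (Poly_Mapping.lookup F a * Poly_Mapping.lookup G b))"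
    by (simp add: sum_product mult_single)
  finally have "ev d (F*G) x = (\<Sum>a\<in>?A. \<Sum>b\<in>?B. Poly_Mapping.lookup F a * Poly_Mapping.lookup G b * mon d (a+b) x)"
    by (simp add: ev_sum ev_single)
  also have "\<dots> = (\<Sum>a\<in>?A. Poly_Mapping.lookup F a * mon d a x) * (\<Sum>b\<in>?B. Poly_Mapping.lookup G b * mon d b x)"
    by (simp add: sum_product mon_add mult_ac)
  also have "\<dots> = ev d F x * ev d G x" by (simp only: ev_def)
  finally show ?thesis .
qed

lemma ev_one: "ev d 1 x = 1"
  by (simp add: ev_def mon_def)

lemma ev_power: "ev d (F ^ n) x = ev d F x ^ n"
  by (induction n) (simp_all add: ev_one ev_mult)

lemma in_vars_one: "in_vars d 1"
  by (simp add: in_vars_def)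

lemma in_vars_mult: "in_vars d F \<Longrightarrow> in_vars d G \<Longrightarrow> in_vars d (F * G)"
  unfolding in_vars_def
proof
  fix \<gamma> assume "\<gamma> \<in> Poly_Mapping.keys (F * G)" "\<forall>\<alpha>\<in>Poly_Mapping.keys F. Poly_Mapping.keys \<alpha> \<subseteq> {..<d}"
    "\<forall>\<alpha>\<in>Poly_Mapping.keys G. Poly_Mapping.keys \<alpha> \<subseteq> {..<d}"
  then obtain a b where "\<gamma> = a + b" "a \<in> Poly_Mapping.keys F" "b \<in> Poly_Mapping.keys G"
    using keys_mult[of F G] by blast
  then show "Poly_Mapping.keys \<gamma> \<subseteq> {..<d}"
    using keys_add[of a b] \<open>\<forall>\<alpha>\<in>Poly_Mapping.keys F. _\<close> \<open>\<forall>\<alpha>\<in>Poly_Mapping.keys G. _\<close> by blast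
qed

lemma in_vars_power: "in_vars d F \<Longrightarrow> in_vars d (F ^ n)"
  by (induction n) (simp_all add: in_vars_one in_vars_mult)

lemma term_eq:
  fixes r :: real and \<theta> :: real
  shows "(complex_of_real r * cis \<theta> ^ j) ^ a * cnj (complex_of_real r * cis \<theta> ^ j) ^ b
     = complex_of_real (r ^ (a + b)) * cis ((real a - real b) * \<theta>) ^ j"
proof -
  have h1: "(complex_of_real r * cis \<theta> ^ j) ^ a = complex_of_real (r ^ a) * cis (real j * real a * \<theta>)"
    by (simp add: power_mult_distrib Complex.DeMoivre mult_ac)
  have h2: "cnj (complex_of_real r * cis \<theta> ^ j) ^ b = complex_of_real (r ^ b) * cis (- (real j * real b * \<theta>))"
    by (simp add: power_mult_distrib Complex.DeMoivre cis_cnj mult_ac)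
  have h3: "cis ((real a - real b) * \<theta>) ^ j = cis (real j * real a * \<theta>) * cis (- (real j * real b * \<theta>))"
    by (simp add: Complex.DeMoivre cis_mult algebra_simps)
  show ?thesis
    unfolding h1 h2 h3 by (simp add: power_add mult_ac)
qed

lemma ang_sum:
  fixes r :: real
  assumes K: "K > 0" and a: "a < K" and b: "b < K"
  shows "(\<Sum>j<K. (complex_of_real r * cis (2*pi/K) ^ j) ^ a * cnj (complex_of_real r * cis (2*pi/K) ^ j) ^ b)
     = (if a = b then of_nat K * complex_of_real (r ^ (2*a)) else 0)"
proof -
  define q where "q = cis ((real a - real b) * (2*pi/K))"
  have "(\<Sum>j<K. (complex_of_real r * cis (2*pi/K) ^ j) ^ a * cnj (complex_of_real r * cis (2*pi/K) ^ j) ^ b)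
     = complex_of_real (r ^ (a + b)) * (\<Sum>j<K. q ^ j)"
    unfolding term_eq q_def by (simp only: sum_distrib_left)
  also have "\<dots> = (if a = b then of_nat K * complex_of_real (r ^ (2*a)) else 0)"
  proof (cases "a = b")
    case True
    then have "q = 1" by (simp add: q_def)
    then show ?thesis using True by (simp add: mult_2[symmetric])
  next
    case False
    have qK: "q ^ K = 1"
    proof -
      have eK: "real K * ((real a - real b) * (2*pi/K)) = 2 * pi * (real a - real b)"
        using K by (simp add: field_simps)
      have "q ^ K = cis (2 * pi * (real a - real b))"
        unfolding q_def Complex.DeMoivre eK ..
      also have "\<dots> = 1"
        by (rule cis_multiple_2pi) (simp add: of_nat_diff)
      finally show ?thesis .
    qed
    have q1: "q \<noteq> 1"
    proof
      assume "q = 1"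
      then have "Re q = 1" by simp
      then have "cos ((real a - real b) * (2*pi/K)) = 1"
        unfolding q_def by simp
      then obtain n :: int where n: "(real a - real b) * (2*pi/K) = of_int n * 2 * pi"
        unfolding cos_one_2pi_int by blast
      then have "2 * pi * (real a - real b) = 2 * pi * (real_of_int n * real K)"
        using K by (simp add: field_simps)
      then have e: "real a - real b = real_of_int n * real K"
        by simp
      show False
      proof (cases "n = 0")
        case True then show False using e False by simp
      next
        case n0: False
        show False
        proof (cases "n > 0")
          case True
          then have "of_int n * real K \<ge> real K" using K by (simp add: mult_le_cancel_right1)
          then show False using e a by linarith
        next
          case False
          then have "n \<le> -1" using n0 by linarith
          then have "of_int n \<le> (-1::real)" by simp
          then have "of_int n * real K \<le> (-1) * real K" by (rule mult_right_mono) simp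
          then show False using e b by linarith
        qed
      qed
    qed
    show ?thesis using False qK q1 by (simp add: sum_gp_strict)
  qed
  finally show ?thesis .
qed

definition Zf :: "nat \<Rightarrow> (nat \<Rightarrow> nat) \<Rightarrow> (nat \<Rightarrow> real) \<Rightarrow> nat \<Rightarrow> complex" where
  "Zf K k t i = complex_of_real (sqrt \<bar>t i\<bar>) * cis (2*pi/K) ^ k i"

definition TT :: "nat \<Rightarrow> (nat \<Rightarrow>\<^sub>0 nat) \<Rightarrow> (nat \<Rightarrow> real) \<Rightarrow> complex" where
  "TT d \<alpha> t = (\<Prod>i<d. complex_of_real (\<bar>t i\<bar> ^ Poly_Mapping.lookup \<alpha> i))"

lemma sqrt_abs_pow: "sqrt \<bar>x\<bar> ^ (2 * n) = \<bar>x\<bar> ^ n"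
  by (simp add: power_mult)

lemma L0:
  assumes K: "K > 0" and lt: "\<And>i. i < d \<Longrightarrow> Poly_Mapping.lookup \<alpha> i < K \<and> Poly_Mapping.lookup \<beta> i < K"
  shows "(\<Sum>k\<in>PiE {..<d} (\<lambda>_. {..<K}). mon d \<alpha> (Zf K k t) * cnj (mon d \<beta> (Zf K k t)))
    = (if (\<forall>i<d. Poly_Mapping.lookup \<alpha> i = Poly_Mapping.lookup \<beta> i) then of_nat K ^ d * TT d \<alpha> t else 0)"
proof -
  define g where "g i j = (complex_of_real (sqrt \<bar>t i\<bar>) * cis (2*pi/K) ^ j) ^ Poly_Mapping.lookup \<alpha> i
     * cnj (complex_of_real (sqrt \<bar>t i\<bar>) * cis (2*pi/K) ^ j) ^ Poly_Mapping.lookup \<beta> i" for i j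
  have 1: "mon d \<alpha> (Zf K k t) * cnj (mon d \<beta> (Zf K k t)) = (\<Prod>i<d. g i (k i))" for k
    unfolding mon_def g_def Zf_def cnj_prod complex_cnj_power prod.distrib[symmetric] ..
  have "(\<Sum>k\<in>PiE {..<d} (\<lambda>_. {..<K}). mon d \<alpha> (Zf K k t) * cnj (mon d \<beta> (Zf K k t)))
     = (\<Prod>i<d. \<Sum>j<K. g i j)"
    unfolding 1 by (rule prod_sum_PiE[symmetric]) auto
  also have "\<dots> = (\<Prod>i<d. if Poly_Mapping.lookup \<alpha> i = Poly_Mapping.lookup \<beta> i
        then of_nat K * complex_of_real (\<bar>t i\<bar> ^ Poly_Mapping.lookup \<alpha> i) else 0)"
  proof (rule prod.cong[OF refl])
    fix i assume "i \<in> {..<d}"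
    then have "Poly_Mapping.lookup \<alpha> i < K" "Poly_Mapping.lookup \<beta> i < K" using lt by auto
    then show "(\<Sum>j<K. g i j) = (if Poly_Mapping.lookup \<alpha> i = Poly_Mapping.lookup \<beta> i
        then of_nat K * complex_of_real (\<bar>t i\<bar> ^ Poly_Mapping.lookup \<alpha> i) else 0)"
      unfolding g_def using ang_sum[OF K] sqrt_abs_pow by simp
  qed
  also have "\<dots> = (if (\<forall>i<d. Poly_Mapping.lookup \<alpha> i = Poly_Mapping.lookup \<beta> i) then of_nat K ^ d * TT d \<alpha> t else 0)"
  proof (cases "\<forall>i<d. Poly_Mapping.lookup \<alpha> i = Poly_Mapping.lookup \<beta> i")
    case True
    then have "(\<Prod>i<d. if Poly_Mapping.lookup \<alpha> i = Poly_Mapping.lookup \<beta> i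
        then of_nat K * complex_of_real (\<bar>t i\<bar> ^ Poly_Mapping.lookup \<alpha> i) else 0)
      = (\<Prod>i<d. of_nat K * complex_of_real (\<bar>t i\<bar> ^ Poly_Mapping.lookup \<alpha> i))"
      by (intro prod.cong) auto
    also have "\<dots> = of_nat K ^ d * TT d \<alpha> t"
      unfolding TT_def prod.distrib by simp
    finally show ?thesis using True by simp
  next
    case False
    then obtain i where "i < d" "Poly_Mapping.lookup \<alpha> i \<noteq> Poly_Mapping.lookup \<beta> i" by auto
    then show ?thesis using False by (intro trans[OF prod_zero]) auto
  qed
  finally show ?thesis .
qed

lemma eq_on_vars:
  assumes "Poly_Mapping.keys \<alpha> \<subseteq> {..<d}" "Poly_Mapping.keys \<beta> \<subseteq> {..<d}"
  shows "(\<forall>i<d. Poly_Mapping.lookup \<alpha> i = Poly_Mapping.lookup \<beta> i) \<longleftrightarrow> \<alpha> = \<beta>"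
proof
  assume h: "\<forall>i<d. Poly_Mapping.lookup \<alpha> i = Poly_Mapping.lookup \<beta> i"
  show "\<alpha> = \<beta>"
  proof (rule poly_mapping_eqI)
    fix i show "Poly_Mapping.lookup \<alpha> i = Poly_Mapping.lookup \<beta> i"
    proof (cases "i < d")
      case True then show ?thesis using h by auto
    next
      case False
      then have "i \<notin> Poly_Mapping.keys \<alpha>" "i \<notin> Poly_Mapping.keys \<beta>" using assms by auto
      then show ?thesis by (simp add: in_keys_iff)
    qed
  qed
qed simp

lemma L1:
  assumes K: "K > 0" and F: "in_vars d F" and G: "in_vars d G"
    and bnd: "\<And>\<alpha> i. \<alpha> \<in> Poly_Mapping.keys F \<union> Poly_Mapping.keys G \<Longrightarrow> i < d \<Longrightarrow> Poly_Mapping.lookup \<alpha> i < K"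
  shows "(\<Sum>k\<in>PiE {..<d} (\<lambda>_. {..<K}). ev d F (Zf K k t) * cnj (ev d G (Zf K k t)))
     = of_nat K ^ d * (\<Sum>\<alpha>\<in>Poly_Mapping.keys F \<inter> Poly_Mapping.keys G.
          Poly_Mapping.lookup F \<alpha> * cnj (Poly_Mapping.lookup G \<alpha>) * TT d \<alpha> t)"
proof -
  let ?A = "Poly_Mapping.keys F" and ?B = "Poly_Mapping.keys G" and ?KS = "PiE {..<d} (\<lambda>_. {..<K})"
  define c where "c \<alpha> \<beta> = Poly_Mapping.lookup F \<alpha> * cnj (Poly_Mapping.lookup G \<beta>)" for \<alpha> \<beta>
  have e: "ev d F z * cnj (ev d G z) = (\<Sum>\<alpha>\<in>?A. \<Sum>\<beta>\<in>?B. c \<alpha> \<beta> * (mon d \<alpha> z * cnj (mon d \<beta> z)))" for z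
    unfolding ev_def cnj_sum sum_product c_def by (simp add: mult_ac)
  have "(\<Sum>k\<in>?KS. ev d F (Zf K k t) * cnj (ev d G (Zf K k t)))
      = (\<Sum>\<alpha>\<in>?A. \<Sum>\<beta>\<in>?B. c \<alpha> \<beta> * (\<Sum>k\<in>?KS. mon d \<alpha> (Zf K k t) * cnj (mon d \<beta> (Zf K k t))))"
    unfolding e sum_distrib_left
    by (subst sum.swap) (rule sum.cong[OF refl], rule sum.swap)
  also have "\<dots> = (\<Sum>\<alpha>\<in>?A. \<Sum>\<beta>\<in>?B. if \<alpha> = \<beta> then c \<alpha> \<alpha> * (of_nat K ^ d * TT d \<alpha> t) else 0)"
  proof (intro sum.cong refl)
    fix \<alpha> \<beta> assume a: "\<alpha> \<in> ?A" and b: "\<beta> \<in> ?B"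
    have ka: "Poly_Mapping.keys \<alpha> \<subseteq> {..<d}" using F a unfolding in_vars_def by auto
    have kb: "Poly_Mapping.keys \<beta> \<subseteq> {..<d}" using G b unfolding in_vars_def by auto
    have "(\<Sum>k\<in>?KS. mon d \<alpha> (Zf K k t) * cnj (mon d \<beta> (Zf K k t)))
      = (if (\<forall>i<d. Poly_Mapping.lookup \<alpha> i = Poly_Mapping.lookup \<beta> i) then of_nat K ^ d * TT d \<alpha> t else 0)"
      by (rule L0[OF K]) (use bnd a b in auto)
    also have "\<dots> = (if \<alpha> = \<beta> then of_nat K ^ d * TT d \<alpha> t else 0)"
      using eq_on_vars[OF ka kb] by simp
    finally show "c \<alpha> \<beta> * (\<Sum>k\<in>?KS. mon d \<alpha> (Zf K k t) * cnj (mon d \<beta> (Zf K k t)))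
        = (if \<alpha> = \<beta> then c \<alpha> \<alpha> * (of_nat K ^ d * TT d \<alpha> t) else 0)" by simp
  qed
  also have "\<dots> = (\<Sum>\<alpha>\<in>?A. if \<alpha> \<in> ?B then c \<alpha> \<alpha> * (of_nat K ^ d * TT d \<alpha> t) else 0)"
    by (rule sum.cong[OF refl]) (simp add: sum.delta)
  also have "\<dots> = (\<Sum>\<alpha>\<in>?A \<inter> ?B. c \<alpha> \<alpha> * (of_nat K ^ d * TT d \<alpha> t))"
    by (rule sum.inter_restrict[symmetric]) simp
  also have "\<dots> = of_nat K ^ d * (\<Sum>\<alpha>\<in>?A \<inter> ?B. Poly_Mapping.lookup F \<alpha> * cnj (Poly_Mapping.lookup G \<alpha>) * TT d \<alpha> t)"
    unfolding c_def sum_distrib_left by (simp add: mult_ac)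
  finally show ?thesis .
qed

definition DD :: "real measure" where "DD = density lborel (erlang_density 0 1)"

lemma probDD: "prob_space DD"
  unfolding DD_def by (rule prob_space_erlang_density) simp

lemma mom: "has_bochner_integral DD (\<lambda>x. \<bar>x\<bar> ^ n) (fact n)"
proof (rule has_bochner_integral_nn_integral)
  show "(\<lambda>x. \<bar>x\<bar> ^ n) \<in> borel_measurable DD" unfolding DD_def by measurable
  show "AE x in DD. 0 \<le> \<bar>x\<bar> ^ n" by simp
  show "0 \<le> (fact n :: real)" by simp
  have "(\<integral>\<^sup>+ x. ennreal (\<bar>x\<bar> ^ n) \<partial>DD) = (\<integral>\<^sup>+ x. ennreal (erlang_density 0 1 x) * ennreal (\<bar>x\<bar> ^ n) \<partial>lborel)"
    unfolding DD_def by (rule nn_integral_density) measurable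
  also have "\<dots> = (\<integral>\<^sup>+ x. ennreal (erlang_density 0 1 x * x ^ n) \<partial>lborel)"
    by (rule nn_integral_cong) (auto simp: erlang_density_def ennreal_mult[symmetric])
  also have "\<dots> = ennreal (fact n)"
    using nn_integral_erlang_ith_moment[of 1 0 n] by simp
  finally show "(\<integral>\<^sup>+ x. ennreal (\<bar>x\<bar> ^ n) \<partial>DD) = ennreal (fact n)" .
qed

lemma momC_int: "integrable DD (\<lambda>x. complex_of_real (\<bar>x\<bar> ^ n))"
  using mom[of n] by (intro integrable_of_real) (auto simp: has_bochner_integral_iff)

lemma momC: "integral\<^sup>L DD (\<lambda>x. complex_of_real (\<bar>x\<bar> ^ n)) = of_real (fact n)"
  unfolding integral_complex_of_real using mom[of n] by (simp add: has_bochner_integral_iff)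

definition PP :: "nat \<Rightarrow> (nat \<Rightarrow> real) measure" where "PP d = PiM {..<d} (\<lambda>_. DD)"

lemma probPP: "prob_space (PP d)"
  unfolding PP_def by (rule prob_space_PiM) (rule probDD)

lemma psf: "product_sigma_finite (\<lambda>_::nat. DD)"
  unfolding product_sigma_finite_def
  using probDD by (simp add: prob_space_imp_sigma_finite)

lemma TT_int: "integrable (PP d) (TT d \<alpha>)"
  unfolding PP_def TT_def[abs_def]
  by (rule product_sigma_finite.product_integrable_prod[OF psf]) (simp_all only: finite_lessThan momC_int)

lemma TT_integral:
  assumes "Poly_Mapping.keys \<alpha> \<subseteq> {..<d}"
  shows "integral\<^sup>L (PP d) (TT d \<alpha>) = of_real (mfact \<alpha>)"
proof -
  have "integral\<^sup>L (PP d) (TT d \<alpha>) = (\<Prod>i<d. integral\<^sup>L DD (\<lambda>x. complex_of_real (\<bar>x\<bar> ^ Poly_Mapping.lookup \<alpha> i)))"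
    unfolding PP_def TT_def[abs_def]
    by (rule product_sigma_finite.product_integral_prod[OF psf]) (simp_all only: finite_lessThan momC_int)
  also have "\<dots> = of_real (\<Prod>i<d. fact (Poly_Mapping.lookup \<alpha> i))"
    unfolding momC of_real_prod ..
  also have "(\<Prod>i<d. fact (Poly_Mapping.lookup \<alpha> i)) = mfact \<alpha>"
    unfolding mfact_def
    by (rule prod.mono_neutral_right) (use assms in \<open>auto simp: in_keys_iff\<close>)
  finally show ?thesis .
qed

lemma apolar_inter:
  "apolar_inner F G = (\<Sum>\<alpha>\<in>Poly_Mapping.keys F \<inter> Poly_Mapping.keys G.
      complex_of_real (mfact \<alpha>) * Poly_Mapping.lookup F \<alpha> * cnj (Poly_Mapping.lookup G \<alpha>))"
  unfolding apolar_inner_def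
  by (rule sum.mono_neutral_right) (auto simp: in_keys_iff)

lemma L2:
  assumes K: "K > 0" and F: "in_vars d F" and G: "in_vars d G"
    and bnd: "\<And>\<alpha> i. \<alpha> \<in> Poly_Mapping.keys F \<union> Poly_Mapping.keys G \<Longrightarrow> i < d \<Longrightarrow> Poly_Mapping.lookup \<alpha> i < K"
  shows "integrable (PP d) (\<lambda>t. \<Sum>k\<in>PiE {..<d} (\<lambda>_. {..<K}). ev d F (Zf K k t) * cnj (ev d G (Zf K k t)))"
    and "integral\<^sup>L (PP d) (\<lambda>t. \<Sum>k\<in>PiE {..<d} (\<lambda>_. {..<K}). ev d F (Zf K k t) * cnj (ev d G (Zf K k t)))
          = of_nat K ^ d * apolar_inner F G"
proof -
  let ?A = "Poly_Mapping.keys F" and ?B = "Poly_Mapping.keys G"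
  define c where "c \<alpha> = Poly_Mapping.lookup F \<alpha> * cnj (Poly_Mapping.lookup G \<alpha>)" for \<alpha>
  have eqf: "(\<lambda>t. \<Sum>k\<in>PiE {..<d} (\<lambda>_. {..<K}). ev d F (Zf K k t) * cnj (ev d G (Zf K k t)))
      = (\<lambda>t. of_nat K ^ d * (\<Sum>\<alpha>\<in>?A \<inter> ?B. c \<alpha> * TT d \<alpha> t))"
    unfolding c_def by (rule ext, rule L1[OF K F G bnd])
  have ints: "\<And>\<alpha>. integrable (PP d) (\<lambda>t. c \<alpha> * TT d \<alpha> t)"
    by (rule integrable_mult_right) (rule TT_int)
  show "integrable (PP d) (\<lambda>t. \<Sum>k\<in>PiE {..<d} (\<lambda>_. {..<K}). ev d F (Zf K k t) * cnj (ev d G (Zf K k t)))"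
    unfolding eqf using ints by simp
  have "integral\<^sup>L (PP d) (\<lambda>t. of_nat K ^ d * (\<Sum>\<alpha>\<in>?A \<inter> ?B. c \<alpha> * TT d \<alpha> t))
      = of_nat K ^ d * (\<Sum>\<alpha>\<in>?A \<inter> ?B. integral\<^sup>L (PP d) (\<lambda>t. c \<alpha> * TT d \<alpha> t))"
    using ints by simp
  also have "\<dots> = of_nat K ^ d * (\<Sum>\<alpha>\<in>?A \<inter> ?B. c \<alpha> * of_real (mfact \<alpha>))"
  proof -
    have "\<And>\<alpha>. \<alpha> \<in> ?A \<inter> ?B \<Longrightarrow> integral\<^sup>L (PP d) (\<lambda>t. c \<alpha> * TT d \<alpha> t) = c \<alpha> * of_real (mfact \<alpha>)"
      using F unfolding in_vars_def by (subst integral_mult_right_zero) (simp add: TT_integral)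
    then show ?thesis by (intro arg_cong[where f="\<lambda>x. of_nat K ^ d * x"] sum.cong refl) auto
  qed
  also have "\<dots> = of_nat K ^ d * apolar_inner F G"
    unfolding apolar_inter c_def by (simp add: mult_ac)
  finally show "integral\<^sup>L (PP d) (\<lambda>t. \<Sum>k\<in>PiE {..<d} (\<lambda>_. {..<K}). ev d F (Zf K k t) * cnj (ev d G (Zf K k t)))
          = of_nat K ^ d * apolar_inner F G" unfolding eqf .
qed

lemma bern_aux:
  fixes x m :: real
  assumes x: "x \<ge> 0" and m: "m \<ge> 0"
  shows "x ^ Suc n \<ge> m ^ Suc n + real (Suc n) * m ^ n * (x - m)"
proof (induction n)
  case 0 then show ?case by simp
next
  case (Suc n)
  have "x ^ Suc (Suc n) = x * x ^ Suc n" by simp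
  also have "\<dots> \<ge> x * (m ^ Suc n + real (Suc n) * m ^ n * (x - m))"
    using Suc x by (rule mult_left_mono)
  finally have 1: "x ^ Suc (Suc n) \<ge> x * (m ^ Suc n + real (Suc n) * m ^ n * (x - m))" .
  have 2: "x * (m ^ Suc n + real (Suc n) * m ^ n * (x - m)) - (m ^ Suc (Suc n) + real (Suc (Suc n)) * m ^ Suc n * (x - m))
      = real (Suc n) * m ^ n * (x - m)^2"
    by (simp add: algebra_simps power2_eq_square)
  have 3: "real (Suc n) * m ^ n * (x - m)^2 \<ge> 0" using m by simp
  show ?case using 1 2 3 by linarith
qed

lemma bern:
  fixes x m :: real
  assumes x: "x \<ge> 0" and m: "m \<ge> 0" and s: "s \<ge> 1"
  shows "x ^ s \<ge> m ^ s + real s * m ^ (s - 1) * (x - m)"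
proof -
  obtain n where "s = Suc n" using s by (cases s) auto
  then show ?thesis using bern_aux[OF x m, of n] by simp
qed

theorem theorem5p1:
  fixes P :: cpoly and d s :: nat
  assumes "in_vars d P" and "s \<ge> 1"
  shows "apolar_norm (P ^ s) \<ge> apolar_norm P ^ s"
proof -
  note Pv = assms(1)
  define Q where "Q = P ^ s"
  have Qv: "in_vars d Q" unfolding Q_def by (rule in_vars_power[OF Pv])
  define U where "U = Poly_Mapping.keys P \<union> Poly_Mapping.keys Q"
  define K where "K = Suc (\<Sum>\<alpha>\<in>U. \<Sum>i<d. Poly_Mapping.lookup \<alpha> i)"
  have K: "K > 0" by (simp add: K_def)
  have bndU: "Poly_Mapping.lookup \<alpha> i < K" if "\<alpha> \<in> U" "i < d" for \<alpha> i
  proof -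
    have "Poly_Mapping.lookup \<alpha> i \<le> (\<Sum>i<d. Poly_Mapping.lookup \<alpha> i)"
      using that by (intro member_le_sum) auto
    also have "\<dots> \<le> (\<Sum>\<alpha>\<in>U. \<Sum>i<d. Poly_Mapping.lookup \<alpha> i)"
      using that by (intro member_le_sum) (auto simp: U_def)
    finally show ?thesis by (simp add: K_def)
  qed
  let ?KS = "PiE {..<d} (\<lambda>_. {..<K})"
  define X where "X k t = ev d P (Zf K k t)" for k t
  have evQ: "ev d Q (Zf K k t) = X k t ^ s" for k t
    unfolding Q_def X_def by (rule ev_power)
  have bP: "\<And>\<alpha> i. \<alpha> \<in> Poly_Mapping.keys P \<union> Poly_Mapping.keys P \<Longrightarrow> i < d \<Longrightarrow> Poly_Mapping.lookup \<alpha> i < K"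
    using bndU unfolding U_def by blast
  have bQ: "\<And>\<alpha> i. \<alpha> \<in> Poly_Mapping.keys Q \<union> Poly_Mapping.keys Q \<Longrightarrow> i < d \<Longrightarrow> Poly_Mapping.lookup \<alpha> i < K"
    using bndU unfolding U_def by blast
  define g1 where "g1 t = (\<Sum>k\<in>?KS. (cmod (X k t))^2)" for t
  define gs where "gs t = (\<Sum>k\<in>?KS. ((cmod (X k t))^2) ^ s)" for t
  have h1: "(\<lambda>t. \<Sum>k\<in>?KS. ev d P (Zf K k t) * cnj (ev d P (Zf K k t))) = (\<lambda>t. complex_of_real (g1 t))"
    unfolding g1_def X_def of_real_sum complex_norm_square ..
  have nq: "((cmod z)^2)^s = (cmod (z^s))^2" for z :: complex
    by (simp add: norm_power power_mult[symmetric] mult.commute)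
  have hs: "(\<lambda>t. \<Sum>k\<in>?KS. ev d Q (Zf K k t) * cnj (ev d Q (Zf K k t))) = (\<lambda>t. complex_of_real (gs t))"
    unfolding gs_def evQ nq of_real_sum complex_norm_square ..
  have i1c: "integrable (PP d) (\<lambda>t. complex_of_real (g1 t))"
    using L2(1)[OF K Pv Pv bP] unfolding h1 .
  have isc: "integrable (PP d) (\<lambda>t. complex_of_real (gs t))"
    using L2(1)[OF K Qv Qv bQ] unfolding hs .
  have i1: "integrable (PP d) g1" using integrable_Re[OF i1c] by simp
  have is': "integrable (PP d) gs" using integrable_Re[OF isc] by simp
  define m where "m = Re (apolar_inner P P)"
  define M where "M = Re (apolar_inner Q Q)"
  have I1: "integral\<^sup>L (PP d) g1 = real K ^ d * m"
  proof -
    have "complex_of_real (integral\<^sup>L (PP d) g1) = of_nat K ^ d * apolar_inner P P"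
      using L2(2)[OF K Pv Pv bP] unfolding h1 integral_complex_of_real .
    then have "integral\<^sup>L (PP d) g1 = Re (of_nat K ^ d * apolar_inner P P)"
      by (metis Re_complex_of_real)
    then show ?thesis unfolding m_def by simp
  qed
  have Is: "integral\<^sup>L (PP d) gs = real K ^ d * M"
  proof -
    have "complex_of_real (integral\<^sup>L (PP d) gs) = of_nat K ^ d * apolar_inner Q Q"
      using L2(2)[OF K Qv Qv bQ] unfolding hs integral_complex_of_real .
    then have "integral\<^sup>L (PP d) gs = Re (of_nat K ^ d * apolar_inner Q Q)"
      by (metis Re_complex_of_real)
    then show ?thesis unfolding M_def by simp
  qed
  have Kd: "real K ^ d > 0" using K by simp
  have "integral\<^sup>L (PP d) g1 \<ge> 0"
    by (rule integral_nonneg_AE) (simp add: g1_def sum_nonneg)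
  then have m0: "m \<ge> 0" using I1 Kd by (simp add: zero_le_mult_iff)
  have cardKS: "real (card ?KS) = real K ^ d" by (simp add: card_PiE)
  define a where "a = real K ^ d * m ^ s - real s * m ^ (s - 1) * (real K ^ d * m)"
  define b where "b = real s * m ^ (s - 1)"
  have pw: "a + b * g1 t \<le> gs t" for t
  proof -
    have "(\<Sum>k\<in>?KS. m ^ s + real s * m ^ (s - 1) * ((cmod (X k t))^2 - m)) \<le> gs t"
      unfolding gs_def by (rule sum_mono) (rule bern[OF _ m0 assms(2)], simp)
    moreover have "(\<Sum>k\<in>?KS. m ^ s + real s * m ^ (s - 1) * ((cmod (X k t))^2 - m)) = a + b * g1 t"
      unfolding a_def b_def g1_def sum.distrib sum_distrib_left[symmetric] sum_subtractf
      using cardKS by (simp add: algebra_simps)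
    ultimately show ?thesis by simp
  qed
  interpret PS: prob_space "PP d" by (rule probPP)
  have "integral\<^sup>L (PP d) (\<lambda>t. a + b * g1 t) = a + b * integral\<^sup>L (PP d) g1"
    using i1 PS.prob_space by simp
  also have "\<dots> = real K ^ d * m ^ s"
    unfolding I1 a_def b_def by (simp add: algebra_simps)
  finally have "real K ^ d * m ^ s = integral\<^sup>L (PP d) (\<lambda>t. a + b * g1 t)" by simp
  also have "\<dots> \<le> integral\<^sup>L (PP d) gs"
    by (rule integral_mono) (use i1 is' pw in auto)
  also have "\<dots> = real K ^ d * M" by (rule Is)
  finally have "m ^ s \<le> M" using Kd by simp
  then have "sqrt (m ^ s) \<le> sqrt M" by (rule real_sqrt_le_mono)
  then show ?thesis
    unfolding apolar_norm_def Q_def[symmetric] m_def[symmetric] M_def[symmetric] real_sqrt_power .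
qed

end
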